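(* Let $\mathcal{N}$ be a ReLU network with widths $n_0,\dots,n_L$ and let $X=[x^{(1)},\dots,x^{(m)}]\in\mathbb{R}^{n_0\times m}$ be a fixed dataset whose $m$ columns are affinely independent. Fix an activation pattern $A$ and let $\mathbf{A}=[A,\dots,A]$ (all points assigned the pattern $A$). Let $n^A_\ell=|\{i: A^\ell_i=1\}|$. Then the image $\{F^{\mathbf{A}}_X(\theta):\theta\in\mathbb{R}^{d_{\operatorname{par}}}\}\subseteq\mathbb{R}^{n_L\times m}$ coincides with the image $\{G_X(\theta'):\theta'\}$ of the fully connected linear network $\mathcal{L}$ with widths $n_0,n_1^A,\dots,n^A_{L-1},n_L$.
   Context: A ReLU network with widths $n_0,\dots,n_L$ has parameters $\theta=(W^{(\ell)},b^{(\ell)})_{\ell=1}^L$ with $W^{(\ell)}\in\mathbb{R}^{n_\ell\times n_{\ell-1}}$, $b^{(\ell)}\in\mathbb{R}^{n_\ell}$. An activation pattern is $A=(A^1,\dots,A^{L-1})$ with $A^\ell\in\{0,1\}^{n_\ell}$. For such $A$, $f^A_\theta(x)=W^{(L)}\big(W^{(L-1)}_A(\cdots(W^{(1)}_Ax+b^{(1)}_A)\cdots)+b^{(L-1)}_A\big)+b^{(L)}$ where $W^{(\ell)}_A=\operatorname{diag}(A^\ell)W^{(\ell)}$, $b^{(\ell)}_A=\operatorname{diag}(A^\ell)b^{(\ell)}$, and $F^{\mathbf{A}}_X(\theta)=[f^A_\theta(x^{(1)}),\dots,f^A_\theta(x^{(m)})]$. The fully connected linear network with widths $k_0,\dots,k_L$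 has parameters $\theta'=(V^{(\ell)},c^{(\ell)})$, $V^{(\ell)}\in\mathbb{R}^{k_\ell\times k_{\ell-1}}$, $c^{(\ell)}\in\mathbb{R}^{k_\ell}$, and computes $h_{\theta'}(x)=V^{(L)}(\cdots(V^{(1)}x+c^{(1)})\cdots)+c^{(L)}$; $G_X(\theta')=[h_{\theta'}(x^{(1)}),\dots,h_{\theta'}(x^{(m)})]$. *)

theory Defs
  imports Main "Jordan_Normal_Form.Matrix"
begin

text \<open>Widths are given by a function n :: nat => nat (n 0, ..., n L).
  Parameters: W l i j is entry (i,j) of the weight matrix of layer l (l = 1..L),
  b l i is entry i of the bias of layer l. Only entries with i < n l and
  j < n (l-1) are ever used, so the parameter space is (up to irrelevant
  entries) R^{d_par}.  An activation pattern is A l i (l = 1..L-1, i < n l),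
  True meaning A^l_i = 1.\<close>

definition affine_layer ::
  "(nat \<Rightarrow> nat) \<Rightarrow> (nat \<Rightarrow> nat \<Rightarrow> nat \<Rightarrow> real) \<Rightarrow> (nat \<Rightarrow> nat \<Rightarrow> real)
   \<Rightarrow> nat \<Rightarrow> (nat \<Rightarrow> real) \<Rightarrow> nat \<Rightarrow> real" where
  "affine_layer n W b l z i = (\<Sum>j<n (l - 1). W l i j * z j) + b l i"

fun pattern_hidden ::
  "(nat \<Rightarrow> nat) \<Rightarrow> (nat \<Rightarrow> nat \<Rightarrow> nat \<Rightarrow> real) \<Rightarrow> (nat \<Rightarrow> nat \<Rightarrow> real)
   \<Rightarrow> (nat \<Rightarrow> nat \<Rightarrow> bool) \<Rightarrow> (nat \<Rightarrow> real) \<Rightarrow> nat \<Rightarrow> (nat \<Rightarrow> real)" where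
  "pattern_hidden n W b A x 0 = x"
| "pattern_hidden n W b A x (Suc l) =
     (\<lambda>i. if A (Suc l) i then affine_layer n W b (Suc l) (pattern_hidden n W b A x l) i else 0)"

definition pattern_net ::
  "(nat \<Rightarrow> nat) \<Rightarrow> nat \<Rightarrow> (nat \<Rightarrow> nat \<Rightarrow> nat \<Rightarrow> real) \<Rightarrow> (nat \<Rightarrow> nat \<Rightarrow> real)
   \<Rightarrow> (nat \<Rightarrow> nat \<Rightarrow> bool) \<Rightarrow> (nat \<Rightarrow> real) \<Rightarrow> nat \<Rightarrow> real" where
  "pattern_net n L W b A x = affine_layer n W b L (pattern_hidden n W b A x (L - 1))"

fun linear_hidden ::
  "(nat \<Rightarrow> nat) \<Rightarrow> (nat \<Rightarrow> nat \<Rightarrow> nat \<Rightarrow> real) \<Rightarrow> (nat \<Rightarrow> nat \<Rightarrow> real)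
   \<Rightarrow> (nat \<Rightarrow> real) \<Rightarrow> nat \<Rightarrow> (nat \<Rightarrow> real)" where
  "linear_hidden k V c x 0 = x"
| "linear_hidden k V c x (Suc l) = affine_layer k V c (Suc l) (linear_hidden k V c x l)"

definition linear_net ::
  "(nat \<Rightarrow> nat) \<Rightarrow> nat \<Rightarrow> (nat \<Rightarrow> nat \<Rightarrow> nat \<Rightarrow> real) \<Rightarrow> (nat \<Rightarrow> nat \<Rightarrow> real)
   \<Rightarrow> (nat \<Rightarrow> real) \<Rightarrow> nat \<Rightarrow> real" where
  "linear_net k L V c x = linear_hidden k V c x L"

definition pattern_output ::
  "(nat \<Rightarrow> nat) \<Rightarrow> nat \<Rightarrow> (nat \<Rightarrow> nat \<Rightarrow> nat \<Rightarrow> real) \<Rightarrow> (nat \<Rightarrow> nat \<Rightarrow> real)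
   \<Rightarrow> (nat \<Rightarrow> nat \<Rightarrow> bool) \<Rightarrow> real mat \<Rightarrow> real mat" where
  "pattern_output n L W b A X =
     mat (n L) (dim_col X) (\<lambda>(i, j). pattern_net n L W b A (\<lambda>r. X $$ (r, j)) i)"

definition linear_output ::
  "(nat \<Rightarrow> nat) \<Rightarrow> nat \<Rightarrow> (nat \<Rightarrow> nat \<Rightarrow> nat \<Rightarrow> real) \<Rightarrow> (nat \<Rightarrow> nat \<Rightarrow> real)
   \<Rightarrow> real mat \<Rightarrow> real mat" where
  "linear_output k L V c X =
     mat (k L) (dim_col X) (\<lambda>(i, j). linear_net k L V c (\<lambda>r. X $$ (r, j)) i)"

definition affinely_independent_cols :: "real mat \<Rightarrow> bool" where
  "affinely_independent_cols X \<longleftrightarrow>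
     (\<forall>a :: nat \<Rightarrow> real.
        (\<Sum>j<dim_col X. a j) = 0 \<and>
        (\<forall>r<dim_row X. (\<Sum>j<dim_col X. a j * X $$ (r, j)) = 0)
        \<longrightarrow> (\<forall>j<dim_col X. a j = 0))"

definition pattern_widths :: "(nat \<Rightarrow> nat) \<Rightarrow> nat \<Rightarrow> (nat \<Rightarrow> nat \<Rightarrow> bool) \<Rightarrow> nat \<Rightarrow> nat" where
  "pattern_widths n L A l =
     (if l = 0 \<or> l = L then n l else card {i. i < n l \<and> A l i})"

end

theory Submission
  imports Defs
begin

definition Tset :: "(nat \<Rightarrow> nat) \<Rightarrow> nat \<Rightarrow> (nat \<Rightarrow> nat \<Rightarrow> bool) \<Rightarrow> nat \<Rightarrow> nat set" where
  "Tset n L A l = (if l = 0 \<or> l = L then {..<n l} else {i. i < n l \<and> A l i})"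

lemma Tset_sub: "Tset n L A l \<subseteq> {..<n l}"
  by (auto simp: Tset_def)

lemma card_Tset: "card (Tset n L A l) = pattern_widths n L A l"
  by (simp add: Tset_def pattern_widths_def)

lemma step_sum:
  assumes bij: "bij_betw (e l) {..<pattern_widths n L A l} (Tset n L A l)"
    and lL: "l < L"
    and z: "\<And>j. j < n l \<Longrightarrow> j \<notin> Tset n L A l \<Longrightarrow> z j = 0"
  shows "(\<Sum>j<pattern_widths n L A l. G (e l j) * z (e l j)) = (\<Sum>j<n l. G j * z j :: real)"
proof -
  have "(\<Sum>j<pattern_widths n L A l. G (e l j) * z (e l j)) = (\<Sum>j\<in>Tset n L A l. G j * z j)"
    using sum.reindex_bij_betw[OF bij, of "\<lambda>j. G j * z j"] by simp
  also have "\<dots> = (\<Sum>j<n l. G j * z j)"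
    using Tset_sub[of n L A l] z by (intro sum.mono_neutral_left) auto
  finally show ?thesis .
qed

lemma core:
  assumes L1: "L \<ge> 1"
    and bij: "\<And>l. bij_betw (e l) {..<pattern_widths n L A l} (Tset n L A l)"
    and e0: "\<And>i. e 0 i = i" and eL: "\<And>i. e L i = i"
    and hV: "\<And>l i j. 1 \<le> l \<Longrightarrow> l \<le> L \<Longrightarrow> i < pattern_widths n L A l \<Longrightarrow>
               j < pattern_widths n L A (l - 1) \<Longrightarrow> V l i j = W l (e l i) (e (l - 1) j)"
    and hc: "\<And>l i. 1 \<le> l \<Longrightarrow> l \<le> L \<Longrightarrow> i < pattern_widths n L A l \<Longrightarrow> c l i = b l (e l i)"
  shows "\<forall>i < n L. linear_net (pattern_widths n L A) L V c x i = pattern_net n L W b A x i"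
proof -
  let ?k = "pattern_widths n L A"
  have zero: "\<And>l j. l < L \<Longrightarrow> j < n l \<Longrightarrow> j \<notin> Tset n L A l \<Longrightarrow> pattern_hidden n W b A x l j = 0"
  proof -
    fix l j assume "l < L" "j < n l" "j \<notin> Tset n L A l"
    then obtain l' where "l = Suc l'" "\<not> A l j" by (cases l) (auto simp: Tset_def)
    then show "pattern_hidden n W b A x l j = 0" by simp
  qed
  have gen: "\<And>l i. Suc l \<le> L \<Longrightarrow> i < ?k (Suc l) \<Longrightarrow>
      (\<forall>j < ?k l. linear_hidden ?k V c x l j = pattern_hidden n W b A x l (e l j)) \<Longrightarrow>
      affine_layer ?k V c (Suc l) (linear_hidden ?k V c x l) i =
      affine_layer n W b (Suc l) (pattern_hidden n W b A x l) (e (Suc l) i)"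
  proof -
    fix l i assume l: "Suc l \<le> L" and i: "i < ?k (Suc l)"
      and IH: "\<forall>j < ?k l. linear_hidden ?k V c x l j = pattern_hidden n W b A x l (e l j)"
    have "affine_layer ?k V c (Suc l) (linear_hidden ?k V c x l) i =
       (\<Sum>j<?k l. W (Suc l) (e (Suc l) i) (e l j) * pattern_hidden n W b A x l (e l j)) + b (Suc l) (e (Suc l) i)"
      unfolding affine_layer_def using l i IH hV hc by (auto intro!: sum.cong)
    also have "\<dots> = (\<Sum>j<n l. W (Suc l) (e (Suc l) i) j * pattern_hidden n W b A x l j) + b (Suc l) (e (Suc l) i)"
      using step_sum[OF bij, where l=l and z="\<lambda>j. pattern_hidden n W b A x l j" and G="W (Suc l) (e (Suc l) i)"] l zero
      by simp
    finally show "affine_layer ?k V c (Suc l) (linear_hidden ?k V c x l) i =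
      affine_layer n W b (Suc l) (pattern_hidden n W b A x l) (e (Suc l) i)"
      by (simp add: affine_layer_def)
  qed
  have hid: "\<forall>j < ?k l. linear_hidden ?k V c x l j = pattern_hidden n W b A x l (e l j)" if "l < L" for l
    using that
  proof (induction l)
    case 0 then show ?case by (simp add: e0)
  next
    case (Suc l)
    show ?case
    proof (intro allI impI)
      fix i assume i: "i < ?k (Suc l)"
      have "e (Suc l) i \<in> Tset n L A (Suc l)" using bij[of "Suc l"] i by (auto simp: bij_betw_def)
      then have A: "A (Suc l) (e (Suc l) i)" using Suc.prems by (auto simp: Tset_def)
      show "linear_hidden ?k V c x (Suc l) i = pattern_hidden n W b A x (Suc l) (e (Suc l) i)"
        using gen[of l i] Suc i A by simp
    qed
  qed
  show ?thesis
  proof (intro allI impI)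
    fix i assume i: "i < n L"
    obtain l where lL: "L = Suc l" using L1 by (cases L) auto
    have ki: "i < ?k (Suc l)" using i lL L1 by (simp add: pattern_widths_def)
    have "linear_net ?k L V c x i = affine_layer ?k V c (Suc l) (linear_hidden ?k V c x l) i"
      by (simp add: linear_net_def lL)
    also have "\<dots> = affine_layer n W b (Suc l) (pattern_hidden n W b A x l) (e (Suc l) i)"
      using gen[OF _ ki] hid lL by simp
    also have "\<dots> = pattern_net n L W b A x i" using eL lL by (simp add: pattern_net_def)
    finally show "linear_net ?k L V c x i = pattern_net n L W b A x i" .
  qed
qed

theorem lemma2p3:
  fixes n :: "nat \<Rightarrow> nat" and L :: nat and X :: "real mat"
    and A :: "nat \<Rightarrow> nat \<Rightarrow> bool"
  assumes "L \<ge> 1"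
    and "dim_row X = n 0"
    and "affinely_independent_cols X"
  shows "{pattern_output n L W b A X | W b. True}
       = {linear_output (pattern_widths n L A) L V c X | V c. True}"
proof -
  let ?k = "pattern_widths n L A"
  have "\<forall>l. \<exists>f. bij_betw f {..<?k l} (Tset n L A l)"
  proof
    fix l
    have "finite (Tset n L A l)" by (rule finite_subset[OF Tset_sub]) simp
    from ex_bij_betw_nat_finite[OF this] show "\<exists>f. bij_betw f {..<?k l} (Tset n L A l)"
      by (simp add: card_Tset atLeast0LessThan)
  qed
  from choice[OF this] obtain f where f: "\<And>l. bij_betw (f l) {..<?k l} (Tset n L A l)" by blast
  define e where "e l = (if l = 0 \<or> l = L then id else f l)" for l
  have bij: "bij_betw (e l) {..<?k l} (Tset n L A l)" for l
  proof (cases "l = 0 \<or> l = L")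
    case True
    then have "e l = id" "?k l = n l" "Tset n L A l = {..<n l}"
      by (simp_all add: e_def pattern_widths_def Tset_def)
    then show ?thesis by (simp add: bij_betw_id)
  next
    case False
    then show ?thesis using f[of l] by (simp add: e_def)
  qed
  have e0: "e 0 i = i" and eL: "e L i = i" for i by (simp_all add: e_def)
  have kL: "?k L = n L" by (simp add: pattern_widths_def)
  have outeq: "pattern_output n L W b A X = linear_output ?k L V c X"
    if H: "\<And>x. \<forall>i < n L. linear_net ?k L V c x i = pattern_net n L W b A x i" for W b V c
    unfolding pattern_output_def linear_output_def kL
    by (rule eq_matI) (simp_all add: H)
  show ?thesis
  proof (intro equalityI subsetI)
    fix M assume "M \<in> {pattern_output n L W b A X | W b. True}"
    then obtain W b where M: "M = pattern_output n L W b A X" by auto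
    define V where "V l i j = W l (e l i) (e (l - 1) j)" for l i j
    define c where "c l i = b l (e l i)" for l i
    have H: "\<forall>i < n L. linear_net ?k L V c x i = pattern_net n L W b A x i" for x
      by (rule core[OF assms(1) bij e0 eL]) (simp_all add: V_def c_def)
    show "M \<in> {linear_output ?k L V c X | V c. True}" unfolding M outeq[OF H] by blast
  next
    fix M assume "M \<in> {linear_output ?k L V c X | V c. True}"
    then obtain V c where M: "M = linear_output ?k L V c X" by auto
    define g where "g l = the_inv_into {..<?k l} (e l)" for l
    have g: "g l (e l i) = i" if "i < ?k l" for l i
      unfolding g_def using bij[of l] that by (auto simp: bij_betw_def the_inv_into_f_f)
    define W where "W l i j = V l (g l i) (g (l - 1) j)" for l i j
    define b where "b l i = c l (g l i)" for l i
    have H: "\<forall>i < n L. linear_net ?k L V c x i = pattern_net n L W b A x i" for x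
      by (rule core[OF assms(1) bij e0 eL]) (simp_all add: W_def b_def g)
    show "M \<in> {pattern_output n L W b A X | W b. True}" unfolding M outeq[OF H, symmetric] by blast
  qed
qed

end
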